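(* Let $\Omega = \mathbb{R}^2/(2\pi\mathbb{Z})^2$ be the flat two-dimensional torus, let $\tau>0$ and $\lambda>0$, let $f$ be a given image on $\Omega$, let $\mathcal{S}$ be a set (the admissible parameter set), and let $F_1, F_2$ be maps assigning to each $\Theta\in\mathcal{S}$ real-valued functions $x\mapsto F_1(f,\Theta)(x)$, $x\mapsto F_2(f,\Theta)(x)$ in $L^1(\Omega)$. For measurable $u:\Omega\to\{0,1\}$ and $\Theta\in\mathcal{S}$ define $$\mathcal{E}^\tau(u,\Theta) = \int_\Omega \big[u\,F_1(f,\Theta) + (1-u)\,F_2(f,\Theta)\big]\,dx + \lambda\sqrt{\tfrac{\pi}{\tau}}\int_\Omega u\, \big(G_\tau*(1-u)\big)\,dx .$$ Let $(u^k,\Theta^k)_{k\ge 1}$ be any sequence generated by the following iteration (the two-phase ICTM), starting from a measurable $u^1:\Omega\to\{0,1\}$: (1) $\Theta^k \in \arg\min_{\Theta\in\mathcal{S}} \int_\Omega \big[u^k F_1(f,\Theta) + (1-u^k)F_2(f,\Theta)\big]\,dx$ (a minimizer is assumed to exist at every step); (2) $\phi^k = F_1(f,\Theta^k) - F_2(f,\Theta^k) + \lambda\sqrt{\tfrac{\pi}{\tau}}\, G_\tau*(1-2u^k)$; (3) $u^{k+1}(x) = 1$ if $\phi^k(x)\le 0$ and $u^{k+1}(x)=0$ otherwise. Then for every $k\ge1$ and every $\tau>0$, $$\mathcal{E}^\tau(u^{k+1},\Theta^{k+1}) \le \mathcal{E}^\tau(u^k,\Theta^k).$$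
   Context: $G_\tau$ denotes the heat kernel on the torus $\Omega$, i.e. the $2\pi\mathbb{Z}^2$-periodization $G_\tau(x)=\sum_{m\in\mathbb{Z}^2}\frac{1}{4\pi\tau}\exp\!\big(-\frac{|x+2\pi m|^2}{4\tau}\big)$ of the Gaussian $\frac{1}{4\pi\tau}e^{-|x|^2/(4\tau)}$, and $*$ is convolution on $\Omega$: $(G_\tau*v)(x)=\int_\Omega G_\tau(x-y)v(y)\,dy$. The term $\sqrt{\pi/\tau}\int_\Omega u\,G_\tau*(1-u)\,dx$ is the paper's heat-kernel approximation of the perimeter of the set $\{u=1\}$; $F_1,F_2$ are the fidelity integrands of a general two-phase segmentation energy, and $\Theta$ collects all parameters/functions appearing in them. *)

theory Defs
  imports "HOL-Analysis.Analysis"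
begin

text \<open>The torus R^2/(2 pi Z)^2 is represented by the fundamental cell
  [0,2pi]^2 (a measure-zero boundary is irrelevant); functions on the torus are
  functions on real x real, of which only the values on the cell matter,
  since the heat kernel below is 2pi-periodic.\<close>

definition Omega :: "(real \<times> real) set" where
  "Omega = cbox (0, 0) (2 * pi, 2 * pi)"

definition heat_kernel :: "real \<Rightarrow> real \<times> real \<Rightarrow> real" where
  "heat_kernel \<tau> x =
     (\<Sum>\<^sub>\<infinity> m \<in> (UNIV :: (int \<times> int) set).
        1 / (4 * pi * \<tau>) *
        exp (- (norm (x + (2 * pi) *\<^sub>R (real_of_int (fst m), real_of_int (snd m))))\<^sup>2 / (4 * \<tau>)))"

definition tconv :: "(real \<times> real \<Rightarrow> real) \<Rightarrow> (real \<times> real \<Rightarrow> real) \<Rightarrow> real \<times> real \<Rightarrow> real" where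
  "tconv g v x = integral\<^sup>L (lebesgue_on Omega) (\<lambda>y. g (x - y) * v y)"

definition fidelity ::
  "('i \<Rightarrow> 'p \<Rightarrow> real \<times> real \<Rightarrow> real) \<Rightarrow> ('i \<Rightarrow> 'p \<Rightarrow> real \<times> real \<Rightarrow> real) \<Rightarrow> 'i
    \<Rightarrow> (real \<times> real \<Rightarrow> real) \<Rightarrow> 'p \<Rightarrow> real" where
  "fidelity F1 F2 f u \<Theta> =
     integral\<^sup>L (lebesgue_on Omega) (\<lambda>x. u x * F1 f \<Theta> x + (1 - u x) * F2 f \<Theta> x)"

definition energy ::
  "real \<Rightarrow> real \<Rightarrow> ('i \<Rightarrow> 'p \<Rightarrow> real \<times> real \<Rightarrow> real) \<Rightarrow> ('i \<Rightarrow> 'p \<Rightarrow> real \<times> real \<Rightarrow> real)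
    \<Rightarrow> 'i \<Rightarrow> (real \<times> real \<Rightarrow> real) \<Rightarrow> 'p \<Rightarrow> real" where
  "energy \<tau> lam F1 F2 f u \<Theta> =
     fidelity F1 F2 f u \<Theta>
     + lam * sqrt (pi / \<tau>) *
       integral\<^sup>L (lebesgue_on Omega) (\<lambda>x. u x * tconv (heat_kernel \<tau>) (\<lambda>y. 1 - u y) x)"

definition ictm_phi ::
  "real \<Rightarrow> real \<Rightarrow> ('i \<Rightarrow> 'p \<Rightarrow> real \<times> real \<Rightarrow> real) \<Rightarrow> ('i \<Rightarrow> 'p \<Rightarrow> real \<times> real \<Rightarrow> real)
    \<Rightarrow> 'i \<Rightarrow> (real \<times> real \<Rightarrow> real) \<Rightarrow> 'p \<Rightarrow> real \<times> real \<Rightarrow> real" where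
  "ictm_phi \<tau> lam F1 F2 f u \<Theta> x =
     F1 f \<Theta> x - F2 f \<Theta> x + lam * sqrt (pi / \<tau>) * tconv (heat_kernel \<tau>) (\<lambda>y. 1 - 2 * u y) x"

end

theory Submission
  imports Defs "HOL-Library.Nat_Bijection" "HOL-Probability.Distributions"
begin


lemma int_decode_abs: "real k / 2 - 1/2 \<le> \<bar>real_of_int (int_decode k)\<bar>"
  unfolding int_decode_def sum_decode_def
  by (cases "even k") (auto elim!: evenE oddE simp: field_simps)

lemma exp_abs_int_finite:
  "(\<integral>\<^sup>+ n. ennreal (exp (- \<bar>real_of_int n\<bar>)) \<partial>count_space (UNIV::int set)) < \<infinity>"
proof -
  have "(\<integral>\<^sup>+ n. ennreal (exp (- \<bar>real_of_int n\<bar>)) \<partial>count_space (UNIV::int set))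
      = (\<integral>\<^sup>+ k. ennreal (exp (- \<bar>real_of_int (int_decode k)\<bar>)) \<partial>count_space UNIV)"
    by (rule nn_integral_bij_count_space[symmetric]) (simp add: bij_int_decode)
  also have "\<dots> = (\<Sum>k. ennreal (exp (- \<bar>real_of_int (int_decode k)\<bar>)))"
    by (simp add: nn_integral_count_space_nat)
  also have "\<dots> \<le> (\<Sum>k. ennreal (exp (1/2) * exp (-1/2) ^ k))"
  proof (intro suminf_le ennreal_leI)
    fix k :: nat
    have "exp (- \<bar>real_of_int (int_decode k)\<bar>) \<le> exp (1/2 - real k / 2)"
      using int_decode_abs[of k] by simp
    also have "\<dots> = exp (1/2) * exp (-1/2) ^ k"
      by (simp add: exp_of_nat_mult[symmetric] exp_add[symmetric] field_simps)
    finally show "exp (- \<bar>real_of_int (int_decode k)\<bar>) \<le> exp (1/2) * exp (-1/2) ^ k" .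
  qed auto
  also have "\<dots> = ennreal (\<Sum>k. exp (1/2) * exp (-1/2) ^ k)"
    by (rule suminf_ennreal2) (auto intro!: summable_mult summable_geometric)
  also have "\<dots> < \<infinity>" by simp
  finally show ?thesis .
qed


definition tv :: "int \<times> int \<Rightarrow> real \<times> real" where
  "tv m = (2 * pi * real_of_int (fst m), 2 * pi * real_of_int (snd m))"

definition gs :: "real \<Rightarrow> real \<times> real \<Rightarrow> real" where
  "gs s z = 1 / (4 * pi * s) * exp (- (norm z)\<^sup>2 / (4 * s))"

definition Gn :: "real \<Rightarrow> real \<times> real \<Rightarrow> ennreal" where
  "Gn s z = (\<integral>\<^sup>+ m. ennreal (gs s (z + tv m)) \<partial>count_space UNIV)"

lemma heat_kernel_alt: "heat_kernel s z = infsum (\<lambda>m. gs s (z + tv m)) UNIV"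
  unfolding heat_kernel_def gs_def tv_def by (simp add: scaleR_Pair)

lemma gs_nonneg: "s > 0 \<Longrightarrow> gs s z \<ge> 0"
  unfolding gs_def by simp

lemma norm_sq_pair: "(norm (a::real, b::real))\<^sup>2 = a\<^sup>2 + b\<^sup>2"
  by (simp add: norm_Pair)

lemma exp_1d_bound:
  fixes a s A :: real and n :: int
  assumes s: "s > 0" and a: "\<bar>a\<bar> \<le> A"
  shows "exp (- (a + 2 * pi * real_of_int n)\<^sup>2 / (4 * s)) \<le> exp (s + A) * exp (- \<bar>real_of_int n\<bar>)"
proof -
  define y where "y = a + 2 * pi * real_of_int n"
  have "0 \<le> (\<bar>y\<bar> - 2 * s)\<^sup>2" by simp
  hence "y\<^sup>2 \<ge> 4 * s * \<bar>y\<bar> - 4 * s\<^sup>2" by (simp add: power2_eq_square algebra_simps)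
  hence h1: "y\<^sup>2 / (4 * s) \<ge> \<bar>y\<bar> - s" using s by (simp add: field_simps power2_eq_square)
  have "\<bar>2 * pi * real_of_int n\<bar> \<ge> \<bar>real_of_int n\<bar>"
  proof -
    have "\<bar>2 * pi * real_of_int n\<bar> = (2 * pi) * \<bar>real_of_int n\<bar>" by (simp add: abs_mult)
    moreover have "(2 * pi) * \<bar>real_of_int n\<bar> \<ge> 1 * \<bar>real_of_int n\<bar>"
      using pi_gt3 by (intro mult_right_mono) auto
    ultimately show ?thesis by simp
  qed
  hence h2: "\<bar>y\<bar> \<ge> \<bar>real_of_int n\<bar> - A" unfolding y_def using a by linarith
  have "- y\<^sup>2 / (4 * s) \<le> s + A + (- \<bar>real_of_int n\<bar>)" using h1 h2 by (simp add: field_simps) 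
  hence "exp (- y\<^sup>2 / (4 * s)) \<le> exp (s + A + (- \<bar>real_of_int n\<bar>))" by simp
  also have "exp (s + A + (- \<bar>real_of_int n\<bar>)) = exp (s + A) * exp (- \<bar>real_of_int n\<bar>)"
    by (rule exp_add)
  finally show ?thesis unfolding y_def .
qed

lemma gs_bound:
  assumes s: "s > 0" and z: "\<bar>fst z\<bar> \<le> A" "\<bar>snd z\<bar> \<le> A"
  shows "gs s (z + tv m) \<le> (1 / (4 * pi * s) * exp (s + A) * exp (s + A)) *
           (exp (- \<bar>real_of_int (fst m)\<bar>) * exp (- \<bar>real_of_int (snd m)\<bar>))"
proof -
  obtain a b where zab: "z = (a, b)" by (cases z)
  obtain m1 m2 where mm: "m = (m1, m2)" by (cases m)
  have e: "exp (- (norm (z + tv m))\<^sup>2 / (4 * s)) =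
      exp (- (a + 2 * pi * real_of_int m1)\<^sup>2 / (4 * s)) * exp (- (b + 2 * pi * real_of_int m2)\<^sup>2 / (4 * s))"
    unfolding zab mm tv_def by (simp add: norm_sq_pair exp_add[symmetric] add_divide_distrib diff_divide_distrib)
  have "exp (- (a + 2 * pi * real_of_int m1)\<^sup>2 / (4 * s)) * exp (- (b + 2 * pi * real_of_int m2)\<^sup>2 / (4 * s))
     \<le> (exp (s + A) * exp (- \<bar>real_of_int m1\<bar>)) * (exp (s + A) * exp (- \<bar>real_of_int m2\<bar>))"
    using z zab by (intro mult_mono exp_1d_bound s) auto
  hence "exp (- (norm (z + tv m))\<^sup>2 / (4 * s)) \<le> (exp (s + A) * exp (s + A)) * (exp (- \<bar>real_of_int m1\<bar>) * exp (- \<bar>real_of_int m2\<bar>))"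
    unfolding e by (simp add: mult_ac)
  hence "1 / (4 * pi * s) * exp (- (norm (z + tv m))\<^sup>2 / (4 * s)) \<le> 1 / (4 * pi * s) * ((exp (s + A) * exp (s + A)) * (exp (- \<bar>real_of_int m1\<bar>) * exp (- \<bar>real_of_int m2\<bar>)))"
    using s by (intro mult_left_mono) auto
  thus ?thesis unfolding gs_def mm by (simp add: mult_ac)
qed

lemma count_space_int_pair: "count_space (UNIV :: (int \<times> int) set) = count_space UNIV \<Otimes>\<^sub>M count_space UNIV"
  by (simp add: pair_measure_countable)

lemma exp_abs_int2_finite:
  "(\<integral>\<^sup>+ m. ennreal (exp (- \<bar>real_of_int (fst m)\<bar>) * exp (- \<bar>real_of_int (snd m)\<bar>)) \<partial>count_space (UNIV::(int\<times>int) set)) < \<infinity>"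
proof -
  interpret c: sigma_finite_measure "count_space (UNIV::int set)"
    by (rule sigma_finite_measure_count_space_countable) simp
  have "(\<integral>\<^sup>+ m. ennreal (exp (- \<bar>real_of_int (fst m)\<bar>) * exp (- \<bar>real_of_int (snd m)\<bar>)) \<partial>count_space (UNIV::(int\<times>int) set))
     = (\<integral>\<^sup>+ m1. \<integral>\<^sup>+ m2. ennreal (exp (- \<bar>real_of_int m1\<bar>)) * ennreal (exp (- \<bar>real_of_int m2\<bar>)) \<partial>count_space UNIV \<partial>count_space UNIV)"
    unfolding count_space_int_pair
    by (subst c.nn_integral_fst[symmetric]) (auto simp: ennreal_mult' count_space_int_pair[symmetric])
  also have "\<dots> = (\<integral>\<^sup>+ m1. ennreal (exp (- \<bar>real_of_int m1\<bar>)) \<partial>count_space UNIV) *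
                  (\<integral>\<^sup>+ m2. ennreal (exp (- \<bar>real_of_int m2\<bar>)) \<partial>count_space UNIV)"
    by (simp add: nn_integral_cmult nn_integral_multc)
  also have "\<dots> < \<infinity>" using exp_abs_int_finite by (simp add: ennreal_mult_less_top)
  finally show ?thesis .
qed

lemma Gn_bound:
  assumes s: "s > 0" and z: "\<bar>fst z\<bar> \<le> A" "\<bar>snd z\<bar> \<le> A"
  shows "Gn s z \<le> ennreal (1 / (4 * pi * s) * exp (s + A) * exp (s + A)) *
     (\<integral>\<^sup>+ m. ennreal (exp (- \<bar>real_of_int (fst m)\<bar>) * exp (- \<bar>real_of_int (snd m)\<bar>)) \<partial>count_space (UNIV::(int\<times>int) set))"
  unfolding Gn_def
  apply (subst nn_integral_cmult[symmetric])
   apply simp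
  apply (rule nn_integral_mono)
  apply (subst ennreal_mult[symmetric])
  using s apply simp
   apply simp
  apply (rule ennreal_leI)
  apply (rule gs_bound[OF s z])
  done

lemma Gn_finite:
  assumes s: "s > 0" and z: "\<bar>fst z\<bar> \<le> A" "\<bar>snd z\<bar> \<le> A"
  shows "Gn s z < \<infinity>"
proof -
  have "ennreal (1 / (4 * pi * s) * exp (s + A) * exp (s + A)) *
     (\<integral>\<^sup>+ m. ennreal (exp (- \<bar>real_of_int (fst m)\<bar>) * exp (- \<bar>real_of_int (snd m)\<bar>)) \<partial>count_space (UNIV::(int\<times>int) set)) < \<infinity>"
    using exp_abs_int2_finite by (simp add: ennreal_mult_less_top)
  thus ?thesis using Gn_bound[OF assms] by (rule le_less_trans[rotated])
qed

lemma Gn_finite': "s > 0 \<Longrightarrow> Gn s z < \<infinity>"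
  by (rule Gn_finite[of s z "max \<bar>fst z\<bar> \<bar>snd z\<bar>"]) auto



lemma infsum_nn_bridge:
  fixes f :: "'a::countable \<Rightarrow> real"
  assumes nn: "\<And>x. f x \<ge> 0" and fin: "(\<integral>\<^sup>+ x. ennreal (f x) \<partial>count_space UNIV) < \<infinity>"
  shows "infsum f UNIV = enn2real (\<integral>\<^sup>+ x. ennreal (f x) \<partial>count_space UNIV)"
    and "ennreal (infsum f UNIV) = (\<integral>\<^sup>+ x. ennreal (f x) \<partial>count_space UNIV)"
proof -
  have int: "integrable (count_space UNIV) f"
    by (rule integrableI_nonneg) (use nn fin in auto)
  hence "Infinite_Set_Sum.abs_summable_on f UNIV" by (simp add: abs_summable_on_def)
  hence "infsum f UNIV = infsetsum f UNIV" by (simp add: infsetsum_infsum)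
  also have "\<dots> = enn2real (\<integral>\<^sup>+ x. ennreal (f x) \<partial>count_space UNIV)"
    by (rule infsetsum_conv_nn_integral) (use nn fin in auto)
  finally show 1: "infsum f UNIV = enn2real (\<integral>\<^sup>+ x. ennreal (f x) \<partial>count_space UNIV)" .
  show "ennreal (infsum f UNIV) = (\<integral>\<^sup>+ x. ennreal (f x) \<partial>count_space UNIV)"
    unfolding 1 using fin by (simp add: less_top)
qed

lemma hk_Gn:
  assumes s: "s > 0"
  shows "heat_kernel s z = enn2real (Gn s z)" "ennreal (heat_kernel s z) = Gn s z"
  unfolding heat_kernel_alt Gn_def
  using infsum_nn_bridge[of "\<lambda>m. gs s (z + tv m)"] Gn_finite'[OF s, of z] gs_nonneg[OF s]
  unfolding Gn_def by auto

lemma hk_nonneg: "s > 0 \<Longrightarrow> heat_kernel s z \<ge> 0"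
  by (simp add: hk_Gn)

lemma gs_meas[measurable]: "gs s \<in> borel_measurable borel"
  unfolding gs_def by measurable

lemma Gn_meas[measurable]: "Gn s \<in> borel_measurable borel"
proof -
  interpret c: sigma_finite_measure "count_space (UNIV::(int\<times>int) set)"
    by (rule sigma_finite_measure_count_space_countable) simp
  have "(\<lambda>(z, m). ennreal (gs s (z + tv m))) \<in> borel_measurable (borel \<Otimes>\<^sub>M count_space UNIV)"
  proof -
    have "(\<lambda>p. ennreal (gs s (fst p + tv (snd p)))) \<in> borel_measurable (borel \<Otimes>\<^sub>M count_space UNIV)"
      by (rule measurable_compose_countable[where f="\<lambda>m p. ennreal (gs s (fst p + tv m))" and g=snd]) auto
    thus ?thesis by (simp add: case_prod_beta')
  qed
  thus ?thesis unfolding Gn_def[abs_def] by (rule c.borel_measurable_nn_integral)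
qed

lemma hk_meas[measurable]: "s > 0 \<Longrightarrow> heat_kernel s \<in> borel_measurable borel"
proof -
  assume s: "s > 0"
  have "heat_kernel s = (\<lambda>z. enn2real (Gn s z))" using hk_Gn[OF s] by auto
  thus ?thesis by simp
qed

lemma Gn_sym: "Gn s (- z) = Gn s z"
proof -
  have "Gn s (- z) = (\<integral>\<^sup>+ m. ennreal (gs s (z + tv (- m))) \<partial>count_space UNIV)"
    unfolding Gn_def
  proof (intro nn_integral_cong)
    fix m :: "int \<times> int"
    have "- z + tv m = - (z + tv (- m))" by (cases m) (simp add: tv_def)
    thus "ennreal (gs s (- z + tv m)) = ennreal (gs s (z + tv (- m)))"
      unfolding gs_def by (simp only: norm_minus_cancel)
  qed
  also have "\<dots> = Gn s z" unfolding Gn_def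
    by (rule nn_integral_bij_count_space) (auto intro!: bij_betwI[where g=uminus])
  finally show ?thesis .
qed

lemma hk_sym: "s > 0 \<Longrightarrow> heat_kernel s (- z) = heat_kernel s z"
  by (simp add: hk_Gn Gn_sym)

lemma hk_bounded:
  assumes s: "s > 0"
  shows "\<exists>C. \<forall>z. \<bar>fst z\<bar> \<le> A \<and> \<bar>snd z\<bar> \<le> A \<longrightarrow> \<bar>heat_kernel s z\<bar> \<le> C"
proof -
  define Bd where "Bd = ennreal (1 / (4 * pi * s) * exp (s + A) * exp (s + A)) *
     (\<integral>\<^sup>+ m. ennreal (exp (- \<bar>real_of_int (fst m)\<bar>) * exp (- \<bar>real_of_int (snd m)\<bar>)) \<partial>count_space (UNIV::(int\<times>int) set))"
  have fin: "Bd < \<infinity>" unfolding Bd_def using exp_abs_int2_finite by (simp add: ennreal_mult_less_top)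
  have "\<bar>heat_kernel s z\<bar> \<le> enn2real Bd" if "\<bar>fst z\<bar> \<le> A" "\<bar>snd z\<bar> \<le> A" for z
  proof -
    have "Gn s z \<le> Bd" unfolding Bd_def by (rule Gn_bound[OF s that])
    hence "enn2real (Gn s z) \<le> enn2real Bd" using fin by (simp add: enn2real_mono)
    thus ?thesis using hk_Gn[OF s, of z] hk_nonneg[OF s, of z] by simp
  qed
  thus ?thesis by blast
qed



lemma nn_translate:
  fixes c :: "'a::euclidean_space"
  assumes [measurable]: "f \<in> borel_measurable borel"
  shows "(\<integral>\<^sup>+x. f (x + c) \<partial>lborel) = (\<integral>\<^sup>+x. f x \<partial>lborel)"
proof -
  have "(\<integral>\<^sup>+x. f x \<partial>lborel) = (\<integral>\<^sup>+x. f x \<partial>distr lborel borel ((+) c))"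
    by (simp add: lborel_distr_plus)
  also have "\<dots> = (\<integral>\<^sup>+x. f (c + x) \<partial>lborel)"
    by (subst nn_integral_distr) auto
  finally show ?thesis by (simp add: add.commute)
qed

lemma gs_nd:
  assumes s: "s > 0"
  shows "gs s z = normal_density 0 (sqrt (2 * s)) (fst z) * normal_density 0 (sqrt (2 * s)) (snd z)"
proof -
  obtain a b where z: "z = (a, b)" by (cases z)
  have "sqrt (2 * pi * (2 * s)) * sqrt (2 * pi * (2 * s)) = 4 * pi * s"
    using s by (simp add: real_sqrt_mult_self)
  moreover have "exp (- (a\<^sup>2 + b\<^sup>2) / (4 * s)) = exp (- a\<^sup>2 / (2 * (2 * s))) * exp (- b\<^sup>2 / (2 * (2 * s)))"
    by (simp add: exp_add[symmetric] add_divide_distrib diff_divide_distrib)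
  ultimately show ?thesis
    unfolding gs_def normal_density_def z using s
    by (simp add: norm_sq_pair)
qed

lemma conv1d:
  assumes s: "s > 0"
  shows "(\<integral>\<^sup>+t. ennreal (normal_density 0 (sqrt (2 * s)) (x - t) * normal_density 0 (sqrt (2 * s)) (t - y)) \<partial>lborel)
    = ennreal (normal_density 0 (sqrt (2 * (2 * s))) (x - y))"
proof -
  have "(\<integral>\<^sup>+t. ennreal (normal_density 0 (sqrt (2 * s)) (x - t) * normal_density 0 (sqrt (2 * s)) (t - y)) \<partial>lborel)
      = (\<integral>\<^sup>+t. ennreal (normal_density 0 (sqrt (2 * s)) ((x - y) - t) * normal_density 0 (sqrt (2 * s)) t) \<partial>lborel)"
    by (subst nn_translate[symmetric, where c=y]) (auto simp: algebra_simps)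
  also have "\<dots> = ennreal (normal_density 0 (sqrt ((sqrt (2 * s))\<^sup>2 + (sqrt (2 * s))\<^sup>2)) (x - y))"
    using conv_normal_density_zero_mean[of "sqrt (2 * s)" "sqrt (2 * s)"] s by (auto dest: fun_cong)
  also have "(sqrt (2 * s))\<^sup>2 + (sqrt (2 * s))\<^sup>2 = 2 * (2 * s)" using s by simp
  finally show ?thesis .
qed

lemma conv2d:
  assumes s: "s > 0"
  shows "(\<integral>\<^sup>+t. ennreal (gs s (x - t) * gs s (t - y)) \<partial>lborel) = ennreal (gs (2 * s) (x - y))"
proof -
  let ?n = "normal_density 0 (sqrt (2 * s))"
  have "(\<integral>\<^sup>+t. ennreal (gs s (x - t) * gs s (t - y)) \<partial>lborel)
     = (\<integral>\<^sup>+t. ennreal (gs s (x - t) * gs s (t - y)) \<partial>(lborel \<Otimes>\<^sub>M lborel))"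
    by (simp add: lborel_prod)
  also have "\<dots> = (\<integral>\<^sup>+t1. \<integral>\<^sup>+t2. ennreal (gs s (x - (t1, t2)) * gs s ((t1, t2) - y)) \<partial>lborel \<partial>lborel)"
    by (subst lborel.nn_integral_fst[symmetric]) (auto simp: lborel_prod)
  also have "\<dots> = (\<integral>\<^sup>+t1. \<integral>\<^sup>+t2. ennreal (?n (fst x - t1) * ?n (t1 - fst y)) *
                       ennreal (?n (snd x - t2) * ?n (t2 - snd y)) \<partial>lborel \<partial>lborel)"
    using s by (intro nn_integral_cong) (simp add: gs_nd ennreal_mult'[symmetric] mult_ac)
  also have "\<dots> = (\<integral>\<^sup>+t1. ennreal (?n (fst x - t1) * ?n (t1 - fst y)) *
                       (\<integral>\<^sup>+t2. ennreal (?n (snd x - t2) * ?n (t2 - snd y)) \<partial>lborel) \<partial>lborel)"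
    by (intro nn_integral_cong nn_integral_cmult) auto
  also have "\<dots> = (\<integral>\<^sup>+t1. ennreal (?n (fst x - t1) * ?n (t1 - fst y)) \<partial>lborel) *
                       (\<integral>\<^sup>+t2. ennreal (?n (snd x - t2) * ?n (t2 - snd y)) \<partial>lborel)"
    by (intro nn_integral_multc) auto
  also have "\<dots> = ennreal (normal_density 0 (sqrt (2 * (2 * s))) (fst x - fst y)) *
                   ennreal (normal_density 0 (sqrt (2 * (2 * s))) (snd x - snd y))"
    using s by (simp add: conv1d)
  also have "\<dots> = ennreal (gs (2 * s) (x - y))"
    using s by (simp add: gs_nd ennreal_mult'[symmetric])
  finally show ?thesis .
qed



definition Qb :: "(real \<times> real) set" where
  "Qb = {0..<2*pi} \<times> {0..<2*pi}"

lemma Omega_sets[measurable]: "Omega \<in> sets borel"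
  unfolding Omega_def by simp

lemma Qb_sets[measurable]: "Qb \<in> sets borel"
  unfolding Qb_def by (simp add: borel_prod[symmetric])

lemma lon_nn: "(\<integral>\<^sup>+ z. f z \<partial>lebesgue_on Omega) = (\<integral>\<^sup>+ z. f z * indicator Omega z \<partial>lborel)"
  by (subst nn_integral_restrict_space) (auto simp: nn_integral_completion)

lemma null_edge: "{z::real\<times>real. fst z = 2*pi \<or> snd z = 2*pi} \<in> null_sets lborel"
proof -
  have "{z::real\<times>real. fst z = 2*pi \<or> snd z = 2*pi} = {2*pi} \<times> UNIV \<union> UNIV \<times> {2*pi}" by auto
  moreover have "{2*pi} \<times> (UNIV::real set) \<in> null_sets (lborel \<Otimes>\<^sub>M lborel)"
    by (rule lborel.times_in_null_sets1) auto
  moreover have "(UNIV::real set) \<times> {2*pi} \<in> null_sets (lborel \<Otimes>\<^sub>M lborel)"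
    by (rule lborel.times_in_null_sets2) auto
  ultimately show ?thesis by (metis lborel_prod null_sets.Un)
qed

lemma ind_Omega_Qb: "AE z in lborel. indicator Omega z = (indicator Qb z :: ennreal)"
proof (rule AE_I'[OF null_edge])
  show "{z \<in> space lborel. \<not> indicator Omega z = (indicator Qb z :: ennreal)}
        \<subseteq> {z::real\<times>real. fst z = 2*pi \<or> snd z = 2*pi}"
    by (auto simp: indicator_def Omega_def Qb_def less_eq_prod_def)
qed

lemma floor_char:
  "(0 \<le> a - 2 * pi * real_of_int n \<and> a - 2 * pi * real_of_int n < 2 * pi) \<longleftrightarrow> n = \<lfloor>a / (2 * pi)\<rfloor>"
proof -
  have p: "2 * pi > 0" by simp
  have "(0 \<le> a - 2 * pi * real_of_int n \<and> a - 2 * pi * real_of_int n < 2 * pi)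
      \<longleftrightarrow> (real_of_int n \<le> a / (2 * pi) \<and> a / (2 * pi) < real_of_int n + 1)"
    using p by (simp add: field_simps)
  also have "\<dots> \<longleftrightarrow> n = \<lfloor>a / (2 * pi)\<rfloor>" by (metis floor_eq_iff)
  finally show ?thesis .
qed

lemma ind_Qb_single:
  "(indicator Qb (s - tv b) :: ennreal) = indicator {(\<lfloor>fst s / (2*pi)\<rfloor>, \<lfloor>snd s / (2*pi)\<rfloor>)} b"
proof -
  have "s - tv b \<in> Qb \<longleftrightarrow> b = (\<lfloor>fst s / (2*pi)\<rfloor>, \<lfloor>snd s / (2*pi)\<rfloor>)"
    using floor_char[of "fst s" "fst b"] floor_char[of "snd s" "snd b"]
    by (cases b; cases s) (auto simp: Qb_def tv_def)
  thus ?thesis by (simp add: indicator_def)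
qed

lemma tv_meas[measurable]: "tv \<in> measurable (count_space UNIV) borel"
  by simp

lemma tiling:
  fixes P :: "real \<times> real \<Rightarrow> ennreal"
  assumes [measurable]: "P \<in> borel_measurable borel"
  shows "(\<integral>\<^sup>+ b. \<integral>\<^sup>+ z. P (z + tv b) \<partial>lebesgue_on Omega \<partial>count_space UNIV) = (\<integral>\<^sup>+ s. P s \<partial>lborel)"
proof -
  interpret c: sigma_finite_measure "count_space (UNIV::(int\<times>int) set)"
    by (rule sigma_finite_measure_count_space_countable) simp
  interpret cp: pair_sigma_finite "count_space (UNIV::(int\<times>int) set)" lborel ..
  have "(\<integral>\<^sup>+ b. \<integral>\<^sup>+ z. P (z + tv b) \<partial>lebesgue_on Omega \<partial>count_space UNIV)
      = (\<integral>\<^sup>+ b. \<integral>\<^sup>+ z. P (z + tv b) * indicator Qb z \<partial>lborel \<partial>count_space UNIV)"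
    unfolding lon_nn
  proof (rule nn_integral_cong)
    fix b :: "int \<times> int"
    show "(\<integral>\<^sup>+ z. P (z + tv b) * indicator Omega z \<partial>lborel) = (\<integral>\<^sup>+ z. P (z + tv b) * indicator Qb z \<partial>lborel)"
      by (rule nn_integral_cong_AE) (use ind_Omega_Qb in \<open>auto\<close>)
  qed
  also have "\<dots> = (\<integral>\<^sup>+ b. \<integral>\<^sup>+ s. P s * indicator Qb (s - tv b) \<partial>lborel \<partial>count_space UNIV)"
  proof (rule nn_integral_cong)
    fix b :: "int \<times> int"
    show "(\<integral>\<^sup>+ z. P (z + tv b) * indicator Qb z \<partial>lborel) = (\<integral>\<^sup>+ s. P s * indicator Qb (s - tv b) \<partial>lborel)"
      using nn_translate[of "\<lambda>s. P s * indicator Qb (s - tv b)" "tv b"] by simp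
  qed
  also have "\<dots> = (\<integral>\<^sup>+ s. \<integral>\<^sup>+ b. P s * indicator Qb (s - tv b) \<partial>count_space UNIV \<partial>lborel)"
  proof (rule cp.Fubini'[symmetric])
    show "(\<lambda>(b, s). P s * indicator Qb (s - tv b)) \<in> borel_measurable (count_space UNIV \<Otimes>\<^sub>M lborel)"
    proof -
      have "(\<lambda>p. (\<lambda>b s. P s * indicator Qb (s - tv b)) (fst p) (snd p)) \<in> borel_measurable (count_space UNIV \<Otimes>\<^sub>M lborel)"
        by (rule measurable_compose_countable[where f="\<lambda>b p. P (snd p) * indicator Qb (snd p - tv b)" and g=fst]) auto
      thus ?thesis by (simp add: case_prod_beta')
    qed
  qed
  also have "\<dots> = (\<integral>\<^sup>+ s. P s \<partial>lborel)"
  proof (rule nn_integral_cong)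
    fix s :: "real \<times> real"
    show "(\<integral>\<^sup>+ b. P s * indicator Qb (s - tv b) \<partial>count_space UNIV) = P s"
      by (simp add: ind_Qb_single)
  qed
  finally show ?thesis .
qed



lemma tv_add: "tv (a + b) = tv a + tv b" and tv_diff: "tv (a - b) = tv a - tv b"
  by (cases a; cases b; simp add: tv_def algebra_simps)+

lemma count_pair2: "count_space (UNIV :: ((int \<times> int) \<times> (int \<times> int)) set) = count_space UNIV \<Otimes>\<^sub>M count_space UNIV"
  by (simp add: pair_measure_countable)

lemma Gn_prod:
  "Gn s u * Gn s v = (\<integral>\<^sup>+ p. ennreal (gs s (u + tv (fst p))) * ennreal (gs s (v + tv (snd p))) \<partial>count_space UNIV)"
proof -
  interpret c: sigma_finite_measure "count_space (UNIV::(int\<times>int) set)"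
    by (rule sigma_finite_measure_count_space_countable) simp
  have "Gn s u * Gn s v = (\<integral>\<^sup>+ a. \<integral>\<^sup>+ b. ennreal (gs s (u + tv a)) * ennreal (gs s (v + tv b)) \<partial>count_space UNIV \<partial>count_space UNIV)"
    unfolding Gn_def
    by (subst nn_integral_multc[symmetric]) (auto simp: nn_integral_cmult)
  also have "\<dots> = (\<integral>\<^sup>+ p. ennreal (gs s (u + tv (fst p))) * ennreal (gs s (v + tv (snd p))) \<partial>(count_space UNIV \<Otimes>\<^sub>M count_space UNIV))"
    by (subst c.nn_integral_fst[symmetric]) (auto simp: count_pair2[symmetric])
  finally show ?thesis by (simp add: count_pair2[symmetric])
qed

lemma CK_nn:
  assumes s: "s > 0"
  shows "(\<integral>\<^sup>+ z. Gn s (x - z) * Gn s (z - y) \<partial>lebesgue_on Omega) = Gn (2 * s) (x - y)"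
proof -
  interpret c2: sigma_finite_measure "count_space (UNIV::((int\<times>int)\<times>(int\<times>int)) set)"
    by (rule sigma_finite_measure_count_space_countable) simp
  interpret c: sigma_finite_measure "count_space (UNIV::(int\<times>int) set)"
    by (rule sigma_finite_measure_count_space_countable) simp
  interpret cp: pair_sigma_finite "count_space (UNIV::((int\<times>int)\<times>(int\<times>int)) set)" lborel ..
  define F where "F z p = ennreal (gs s (x - z + tv (fst p))) * ennreal (gs s (z - y + tv (snd p))) * indicator Omega z"
    for z :: "real \<times> real" and p :: "(int\<times>int)\<times>(int\<times>int)"
  define P where "P c t = ennreal (gs s (x + tv c - t) * gs s (t - y))" for c t
  have [measurable]: "P c \<in> borel_measurable borel" for c unfolding P_def by measurable
  have "(\<integral>\<^sup>+ z. Gn s (x - z) * Gn s (z - y) \<partial>lebesgue_on Omega)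
      = (\<integral>\<^sup>+ z. \<integral>\<^sup>+ p. F z p \<partial>count_space UNIV \<partial>lborel)"
    unfolding lon_nn Gn_prod F_def by (simp add: nn_integral_multc)
  also have "\<dots> = (\<integral>\<^sup>+ p. \<integral>\<^sup>+ z. F z p \<partial>lborel \<partial>count_space UNIV)"
  proof (rule cp.Fubini')
    have "(\<lambda>q. (\<lambda>p z. F z p) (fst q) (snd q)) \<in> borel_measurable (count_space UNIV \<Otimes>\<^sub>M lborel)"
      by (rule measurable_compose_countable[where f="\<lambda>p q. F (snd q) p" and g=fst]) (auto simp: F_def)
    thus "(\<lambda>(p, z). F z p) \<in> borel_measurable (count_space UNIV \<Otimes>\<^sub>M lborel)"
      by (simp add: case_prod_beta')
  qed
  also have "\<dots> = (\<integral>\<^sup>+ p. (\<lambda>q. \<integral>\<^sup>+ z. P (fst q) (z + tv (snd q)) \<partial>lebesgue_on Omega) ((\<lambda>(a, b). (a + b, b)) p) \<partial>count_space UNIV)"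
  proof (rule nn_integral_cong)
    fix p :: "(int\<times>int)\<times>(int\<times>int)"
    obtain a b where p: "p = (a, b)" by (cases p)
    show "(\<integral>\<^sup>+ z. F z p \<partial>lborel) = (\<lambda>q. \<integral>\<^sup>+ z. P (fst q) (z + tv (snd q)) \<partial>lebesgue_on Omega) ((\<lambda>(a, b). (a + b, b)) p)"
      unfolding lon_nn p F_def P_def
      by (intro nn_integral_cong) (simp add: tv_add ennreal_mult' gs_nonneg[OF s] algebra_simps)
  qed
  also have "\<dots> = (\<integral>\<^sup>+ q. \<integral>\<^sup>+ z. P (fst q) (z + tv (snd q)) \<partial>lebesgue_on Omega \<partial>count_space UNIV)"
    by (rule nn_integral_bij_count_space)
       (auto intro!: bij_betwI[where g="\<lambda>(c, b). (c - b, b)"])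
  also have "\<dots> = (\<integral>\<^sup>+ c. \<integral>\<^sup>+ b. \<integral>\<^sup>+ z. P c (z + tv b) \<partial>lebesgue_on Omega \<partial>count_space UNIV \<partial>count_space UNIV)"
    unfolding count_pair2
    by (subst c.nn_integral_fst[symmetric]) auto
  also have "\<dots> = (\<integral>\<^sup>+ c. \<integral>\<^sup>+ t. P c t \<partial>lborel \<partial>count_space UNIV)"
    by (simp add: tiling)
  also have "\<dots> = (\<integral>\<^sup>+ c. ennreal (gs (2 * s) (x - y + tv c)) \<partial>count_space UNIV)"
    unfolding P_def
  proof (rule nn_integral_cong)
    fix c :: "int \<times> int"
    show "(\<integral>\<^sup>+ t. ennreal (gs s (x + tv c - t) * gs s (t - y)) \<partial>lborel) = ennreal (gs (2 * s) (x - y + tv c))"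
      using conv2d[OF s, of "x + tv c" y] by (simp add: algebra_simps)
  qed
  also have "\<dots> = Gn (2 * s) (x - y)" by (simp add: Gn_def)
  finally show ?thesis .
qed



abbreviation "L \<equiv> lebesgue_on Omega"

lemma space_L[simp]: "space L = Omega" by (simp add: space_restrict_space)

lemma L_fin: "finite_measure L"
proof -
  have "Omega \<in> lmeasurable" unfolding Omega_def by (rule lmeasurable_cbox)
  show ?thesis using finite_measure_lebesgue_on[OF \<open>Omega \<in> lmeasurable\<close>] by blast
qed

lemma LL_fin: "finite_measure (L \<Otimes>\<^sub>M L)"
  by (intro finite_measure_pair_measure L_fin)

interpretation Lm: finite_measure L by (rule L_fin)
interpretation LLp: pair_sigma_finite L L ..

lemma id_meas: "(\<lambda>x. x) \<in> measurable L borel"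
proof -
  have "(\<lambda>x. x) \<in> measurable (completion lborel) borel"
    by (rule measurable_completion) simp
  thus ?thesis by (rule measurable_restrict_space1)
qed

lemma borel_L: "f \<in> borel_measurable borel \<Longrightarrow> f \<in> borel_measurable L"
  using measurable_comp[OF id_meas] by (simp add: comp_def)

definition bm :: "(real \<times> real \<Rightarrow> real) \<Rightarrow> bool" where
  "bm f \<longleftrightarrow> f \<in> borel_measurable L \<and> (\<exists>C. \<forall>x\<in>Omega. \<bar>f x\<bar> \<le> C)"

definition bk :: "(real \<times> real \<Rightarrow> real \<times> real \<Rightarrow> real) \<Rightarrow> bool" where
  "bk k \<longleftrightarrow> case_prod k \<in> borel_measurable (L \<Otimes>\<^sub>M L) \<and> (\<exists>C. \<forall>x\<in>Omega. \<forall>y\<in>Omega. \<bar>k x y\<bar> \<le> C)"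

lemma bm_int: "bm f \<Longrightarrow> integrable L f"
  unfolding bm_def
  by (auto intro!: Lm.integrable_const_bound AE_I2)

lemma bm_mult: "bm f \<Longrightarrow> bm g \<Longrightarrow> bm (\<lambda>x. f x * g x)"
  unfolding bm_def
proof (elim conjE exE, intro conjI)
  fix C D assume "\<forall>x\<in>Omega. \<bar>f x\<bar> \<le> C" "\<forall>x\<in>Omega. \<bar>g x\<bar> \<le> D"
  hence "\<forall>x\<in>Omega. \<bar>f x * g x\<bar> \<le> C * D"
    by (auto simp: abs_mult intro!: mult_mono)
  thus "\<exists>C. \<forall>x\<in>Omega. \<bar>f x * g x\<bar> \<le> C" by blast
qed auto

lemma bm_add: "bm f \<Longrightarrow> bm g \<Longrightarrow> bm (\<lambda>x. f x + g x)"
  unfolding bm_def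
proof (elim conjE exE, intro conjI)
  fix C D assume "\<forall>x\<in>Omega. \<bar>f x\<bar> \<le> C" "\<forall>x\<in>Omega. \<bar>g x\<bar> \<le> D"
  hence "\<forall>x\<in>Omega. \<bar>f x + g x\<bar> \<le> C + D" by (auto intro!: order.trans[OF abs_triangle_ineq] add_mono)
  thus "\<exists>C. \<forall>x\<in>Omega. \<bar>f x + g x\<bar> \<le> C" by blast
qed auto

lemma bm_const: "bm (\<lambda>x. c)"
  unfolding bm_def by auto

lemma bm_cmult: "bm f \<Longrightarrow> bm (\<lambda>x. c * f x)"
  using bm_mult[OF bm_const] .

lemma bm_diff: "bm f \<Longrightarrow> bm g \<Longrightarrow> bm (\<lambda>x. f x - g x)"
  using bm_add[of f "\<lambda>x. (-1) * g x"] bm_cmult[of g "-1"] by simp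

lemma bm_cong: "bm f \<Longrightarrow> (\<And>x. x \<in> Omega \<Longrightarrow> f x = g x) \<Longrightarrow> bm g"
  unfolding bm_def
proof (elim conjE exE, intro conjI)
  assume "f \<in> borel_measurable L" "\<And>x. x \<in> Omega \<Longrightarrow> f x = g x"
  thus "g \<in> borel_measurable L" by (metis measurable_cong space_L)
next
  fix C assume "\<forall>x\<in>Omega. \<bar>f x\<bar> \<le> C" "\<And>x. x \<in> Omega \<Longrightarrow> f x = g x"
  thus "\<exists>C. \<forall>x\<in>Omega. \<bar>g x\<bar> \<le> C" by auto
qed

lemma bk_int:
  assumes k: "bk k" and a: "bm a" and b: "bm b"
  shows "integrable (L \<Otimes>\<^sub>M L) (\<lambda>(x, y). a x * k x y * b y)"
proof -
  interpret LL: finite_measure "L \<Otimes>\<^sub>M L" by (rule LL_fin)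
  obtain C where C: "\<forall>x\<in>Omega. \<forall>y\<in>Omega. \<bar>k x y\<bar> \<le> C" using k unfolding bk_def by blast
  obtain A where A: "\<forall>x\<in>Omega. \<bar>a x\<bar> \<le> A" using a unfolding bm_def by blast
  obtain B where B: "\<forall>x\<in>Omega. \<bar>b x\<bar> \<le> B" using b unfolding bm_def by blast
  have [measurable]: "a \<in> borel_measurable L" "b \<in> borel_measurable L" "case_prod k \<in> borel_measurable (L \<Otimes>\<^sub>M L)"
    using a b k unfolding bm_def bk_def by auto
  show ?thesis
  proof (rule LL.integrable_const_bound[where B="A * C * B"])
    show "AE p in L \<Otimes>\<^sub>M L. norm ((\<lambda>(x, y). a x * k x y * b y) p) \<le> A * C * B"
    proof (rule AE_I2)
      fix p assume "p \<in> space (L \<Otimes>\<^sub>M L)"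
      then obtain x y where p: "p = (x, y)" "x \<in> Omega" "y \<in> Omega" by (auto simp: space_pair_measure)
      have "0 \<le> A" "0 \<le> C" "0 \<le> B" using p A C B by (meson abs_ge_zero order_trans)+
      thus "norm ((\<lambda>(x, y). a x * k x y * b y) p) \<le> A * C * B"
        using p A C B by (auto simp: abs_mult intro!: mult_mono)
    qed
    have "(\<lambda>p. a (fst p) * case_prod k p * b (snd p)) \<in> borel_measurable (L \<Otimes>\<^sub>M L)" by measurable
    thus "(\<lambda>(x, y). a x * k x y * b y) \<in> borel_measurable (L \<Otimes>\<^sub>M L)"
      by (simp add: case_prod_beta')
  qed
qed

lemma bk_sect: "bk k \<Longrightarrow> x \<in> Omega \<Longrightarrow> bm (\<lambda>y. k x y)"
  unfolding bk_def bm_def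
  using measurable_Pair2[of "case_prod k" L L borel x] by auto

lemma bk_sect2: "bk k \<Longrightarrow> y \<in> Omega \<Longrightarrow> bm (\<lambda>x. k x y)"
  unfolding bk_def bm_def
  using measurable_Pair1[of "case_prod k" L L borel y] by auto

lemma bk_row:
  assumes k: "bk k" and b: "bm b"
  shows "bm (\<lambda>x. \<integral>y. k x y * b y \<partial>L)"
proof -
  obtain C where C: "\<forall>x\<in>Omega. \<forall>y\<in>Omega. \<bar>k x y\<bar> \<le> C" using k unfolding bk_def by blast
  obtain B where B: "\<forall>x\<in>Omega. \<bar>b x\<bar> \<le> B" using b unfolding bm_def by blast
  have [measurable]: "b \<in> borel_measurable L" "case_prod k \<in> borel_measurable (L \<Otimes>\<^sub>M L)"
    using b k unfolding bm_def bk_def by auto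
  have m: "(\<lambda>x. \<integral>y. k x y * b y \<partial>L) \<in> borel_measurable L"
  proof (rule Lm.borel_measurable_lebesgue_integral)
    have "(\<lambda>p. case_prod k p * b (snd p)) \<in> borel_measurable (L \<Otimes>\<^sub>M L)" by measurable
    thus "(\<lambda>(x, y). k x y * b y) \<in> borel_measurable (L \<Otimes>\<^sub>M L)" by (simp add: case_prod_beta')
  qed
  have "\<bar>\<integral>y. k x y * b y \<partial>L\<bar> \<le> measure L Omega * (C * B)" if x: "x \<in> Omega" for x
  proof -
    have bmkb: "bm (\<lambda>y. k x y * b y)" using bm_mult[OF bk_sect[OF k x] b] .
    have "\<bar>\<integral>y. k x y * b y \<partial>L\<bar> \<le> (\<integral>y. \<bar>k x y * b y\<bar> \<partial>L)"
      by (rule integral_abs_bound)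
    also have "\<dots> \<le> (\<integral>y. C * B \<partial>L)"
    proof (rule integral_mono)
      show "integrable L (\<lambda>y. \<bar>k x y * b y\<bar>)" using bm_int[OF bmkb] by simp
      show "integrable L (\<lambda>y. C * B)" by simp
      fix y assume y: "y \<in> space L"
      have "0 \<le> C" "0 \<le> B" using x y C B by (meson abs_ge_zero order_trans space_L)+
      thus "\<bar>k x y * b y\<bar> \<le> C * B" using x y C B by (auto simp: abs_mult intro!: mult_mono)
    qed
    also have "\<dots> = measure L Omega * (C * B)" by simp
    finally show ?thesis .
  qed
  thus ?thesis using m unfolding bm_def by blast
qed



lemma Omega_iff: "z \<in> Omega \<longleftrightarrow> 0 \<le> fst z \<and> fst z \<le> 2*pi \<and> 0 \<le> snd z \<and> snd z \<le> 2*pi"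
  unfolding Omega_def by (cases z) (simp add: cbox_Pair_eq)

lemma bk_swap: "bk k \<Longrightarrow> bk (\<lambda>y x. k x y)"
  unfolding bk_def
proof (elim conjE exE, intro conjI)
  assume "case_prod k \<in> borel_measurable (L \<Otimes>\<^sub>M L)"
  thus "(\<lambda>(y, x). k x y) \<in> borel_measurable (L \<Otimes>\<^sub>M L)"
    using measurable_pair_swap_iff[of "case_prod k" L L borel] by simp
next
  fix C assume "\<forall>x\<in>Omega. \<forall>y\<in>Omega. \<bar>k x y\<bar> \<le> C"
  thus "\<exists>C. \<forall>x\<in>Omega. \<forall>y\<in>Omega. \<bar>k y x\<bar> \<le> C" by blast
qed

lemma bk_col:
  assumes k: "bk k" and a: "bm a"
  shows "bm (\<lambda>y. \<integral>x. a x * k x y \<partial>L)"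
  using bk_row[OF bk_swap[OF k] a] by (simp add: mult.commute)

lemma SWAP:
  assumes k: "bk k" and a: "bm a" and b: "bm b"
  shows "(\<integral>x. a x * (\<integral>y. k x y * b y \<partial>L) \<partial>L) = (\<integral>y. b y * (\<integral>x. a x * k x y \<partial>L) \<partial>L)"
proof -
  have "(\<integral>x. a x * (\<integral>y. k x y * b y \<partial>L) \<partial>L) = (\<integral>x. (\<integral>y. a x * k x y * b y \<partial>L) \<partial>L)"
    by (simp add: mult.assoc)
  also have "\<dots> = (\<integral>y. (\<integral>x. a x * k x y * b y \<partial>L) \<partial>L)"
    using LLp.Fubini_integral[of "\<lambda>x y. a x * k x y * b y"] bk_int[OF k a b] by simp
  also have "\<dots> = (\<integral>y. b y * (\<integral>x. a x * k x y \<partial>L) \<partial>L)"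
    by (simp add: mult.commute mult.left_commute flip: integral_mult_right_zero)
  finally show ?thesis .
qed

lemma hk_bk:
  assumes s: "s > 0"
  shows "bk (\<lambda>x y. heat_kernel s (x - y))"
  unfolding bk_def
proof (intro conjI)
  have m1: "(\<lambda>p. fst p) \<in> measurable (L \<Otimes>\<^sub>M L) borel"
    using measurable_comp[OF measurable_fst id_meas] by (simp add: comp_def)
  have m2: "(\<lambda>p. snd p) \<in> measurable (L \<Otimes>\<^sub>M L) borel"
    using measurable_comp[OF measurable_snd id_meas] by (simp add: comp_def)
  have "(\<lambda>p. fst p - snd p) \<in> measurable (L \<Otimes>\<^sub>M L) borel"
    using borel_measurable_diff[OF m1 m2] .
  hence "(\<lambda>p. heat_kernel s (fst p - snd p)) \<in> borel_measurable (L \<Otimes>\<^sub>M L)"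
    using measurable_comp[OF _ hk_meas[OF s]] by (simp add: comp_def)
  thus "(\<lambda>(x, y). heat_kernel s (x - y)) \<in> borel_measurable (L \<Otimes>\<^sub>M L)"
    by (simp add: case_prod_beta')
next
  obtain C where C: "\<forall>z. \<bar>fst z\<bar> \<le> 2*pi \<and> \<bar>snd z\<bar> \<le> 2*pi \<longrightarrow> \<bar>heat_kernel s z\<bar> \<le> C"
    using hk_bounded[OF s] by blast
  have "\<bar>heat_kernel s (x - y)\<bar> \<le> C" if "x \<in> Omega" "y \<in> Omega" for x y
    using C[rule_format, of "x - y"] that unfolding Omega_iff by (auto simp: abs_le_iff)
  thus "\<exists>C. \<forall>x\<in>Omega. \<forall>y\<in>Omega. \<bar>heat_kernel s (x - y)\<bar> \<le> C" by blast
qed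

lemma CK_real:
  assumes s: "s > 0" and x: "x \<in> Omega" and y: "y \<in> Omega"
  shows "heat_kernel (2 * s) (x - y) = (\<integral>z. heat_kernel s (x - z) * heat_kernel s (z - y) \<partial>L)"
proof -
  have bmz: "bm (\<lambda>z. heat_kernel s (x - z) * heat_kernel s (z - y))"
    by (rule bm_mult[OF bk_sect[OF hk_bk[OF s] x] bk_sect2[OF hk_bk[OF s] y]])
  have "ennreal (\<integral>z. heat_kernel s (x - z) * heat_kernel s (z - y) \<partial>L)
      = (\<integral>\<^sup>+z. ennreal (heat_kernel s (x - z) * heat_kernel s (z - y)) \<partial>L)"
    by (rule nn_integral_eq_integral[symmetric]) (use bm_int[OF bmz] hk_nonneg[OF s] in auto)
  also have "\<dots> = (\<integral>\<^sup>+z. Gn s (x - z) * Gn s (z - y) \<partial>L)"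
    using s by (simp add: hk_Gn(2)[symmetric] ennreal_mult' hk_nonneg)
  also have "\<dots> = Gn (2 * s) (x - y)" by (rule CK_nn[OF s])
  also have "\<dots> = ennreal (heat_kernel (2 * s) (x - y))" using hk_Gn(2)[of "2 * s" "x-y"] s by simp
  finally show ?thesis
    using s by (simp add: hk_nonneg integral_nonneg_AE mult_nonneg_nonneg)
qed

lemma PD:
  assumes t: "t > 0" and w: "bm w"
  shows "0 \<le> (\<integral>x. w x * tconv (heat_kernel t) w x \<partial>L)"
proof -
  define s where "s = t / 2"
  have s: "s > 0" and t2: "t = 2 * s" using t by (auto simp: s_def)
  define H where "H = heat_kernel s"
  have kH: "bk (\<lambda>x y. H (x - y))" unfolding H_def by (rule hk_bk[OF s])
  define h where "h z = (\<integral>y. H (z - y) * w y \<partial>L)" for z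
  have bh: "bm h" unfolding h_def by (rule bk_row[OF kH w])
  have tc: "tconv (heat_kernel t) w x = (\<integral>z. H (x - z) * h z \<partial>L)" if x: "x \<in> Omega" for x
  proof -
    have "tconv (heat_kernel t) w x = (\<integral>y. w y * (\<integral>z. H (x - z) * H (z - y) \<partial>L) \<partial>L)"
      unfolding tconv_def t2 H_def
      apply (intro Bochner_Integration.integral_cong refl)
      subgoal for y using CK_real[OF s x, of y] by (simp add: mult.commute)
      done
    also have "\<dots> = (\<integral>z. H (x - z) * (\<integral>y. H (z - y) * w y \<partial>L) \<partial>L)"
      by (rule SWAP[OF kH bk_sect[OF kH x] w, symmetric])
    finally show ?thesis unfolding h_def .
  qed
  have "(\<integral>x. w x * tconv (heat_kernel t) w x \<partial>L) = (\<integral>x. w x * (\<integral>z. H (x - z) * h z \<partial>L) \<partial>L)"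
    by (intro Bochner_Integration.integral_cong refl) (simp add: tc)
  also have "\<dots> = (\<integral>z. h z * (\<integral>x. w x * H (x - z) \<partial>L) \<partial>L)"
    by (rule SWAP[OF kH w bh])
  also have "\<dots> = (\<integral>z. h z * h z \<partial>L)"
  proof -
    have "(\<integral>x. w x * H (x - z) \<partial>L) = h z" for z
      unfolding h_def H_def
      by (intro Bochner_Integration.integral_cong refl)
         (metis hk_sym[OF s] minus_diff_eq mult.commute)
    thus ?thesis by simp
  qed
  also have "\<dots> \<ge> 0" by (simp add: integral_nonneg_AE)
  finally show ?thesis .
qed



definition Ib :: "real \<Rightarrow> (real \<times> real \<Rightarrow> real) \<Rightarrow> (real \<times> real \<Rightarrow> real) \<Rightarrow> real" where
  "Ib t a b = (\<integral>x. a x * tconv (heat_kernel t) b x \<partial>L)"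

lemma tconv_bm: "t > 0 \<Longrightarrow> bm b \<Longrightarrow> bm (tconv (heat_kernel t) b)"
  unfolding tconv_def[abs_def] using bk_row[OF hk_bk] by blast

lemma tconv_lin:
  assumes t: "t > 0" and b1: "bm b1" and b2: "bm b2" and x: "x \<in> Omega"
  shows "tconv (heat_kernel t) (\<lambda>y. \<alpha> * b1 y + \<beta> * b2 y) x = \<alpha> * tconv (heat_kernel t) b1 x + \<beta> * tconv (heat_kernel t) b2 x"
proof -
  have i1: "integrable L (\<lambda>y. heat_kernel t (x - y) * b1 y)"
    by (rule bm_int[OF bm_mult[OF bk_sect[OF hk_bk[OF t] x] b1]])
  have i2: "integrable L (\<lambda>y. heat_kernel t (x - y) * b2 y)"
    by (rule bm_int[OF bm_mult[OF bk_sect[OF hk_bk[OF t] x] b2]])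
  have "tconv (heat_kernel t) (\<lambda>y. \<alpha> * b1 y + \<beta> * b2 y) x
     = (\<integral>y. \<alpha> * (heat_kernel t (x - y) * b1 y) + \<beta> * (heat_kernel t (x - y) * b2 y) \<partial>L)"
    unfolding tconv_def by (simp add: algebra_simps)
  also have "\<dots> = \<alpha> * tconv (heat_kernel t) b1 x + \<beta> * tconv (heat_kernel t) b2 x"
    unfolding tconv_def using i1 i2 by simp
  finally show ?thesis .
qed

lemma Ib_lin2:
  assumes t: "t > 0" and a: "bm a" and b1: "bm b1" and b2: "bm b2"
  shows "Ib t a (\<lambda>y. \<alpha> * b1 y + \<beta> * b2 y) = \<alpha> * Ib t a b1 + \<beta> * Ib t a b2"
proof -
  have i1: "integrable L (\<lambda>x. a x * tconv (heat_kernel t) b1 x)"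
    by (rule bm_int[OF bm_mult[OF a tconv_bm[OF t b1]]])
  have i2: "integrable L (\<lambda>x. a x * tconv (heat_kernel t) b2 x)"
    by (rule bm_int[OF bm_mult[OF a tconv_bm[OF t b2]]])
  have "Ib t a (\<lambda>y. \<alpha> * b1 y + \<beta> * b2 y) =
     (\<integral>x. \<alpha> * (a x * tconv (heat_kernel t) b1 x) + \<beta> * (a x * tconv (heat_kernel t) b2 x) \<partial>L)"
    unfolding Ib_def
    by (intro Bochner_Integration.integral_cong refl) (simp add: tconv_lin[OF t b1 b2] algebra_simps)
  also have "\<dots> = \<alpha> * Ib t a b1 + \<beta> * Ib t a b2"
    unfolding Ib_def using i1 i2 by simp
  finally show ?thesis .
qed

lemma Ib_lin1:
  assumes t: "t > 0" and a1: "bm a1" and a2: "bm a2" and b: "bm b"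
  shows "Ib t (\<lambda>y. \<alpha> * a1 y + \<beta> * a2 y) b = \<alpha> * Ib t a1 b + \<beta> * Ib t a2 b"
proof -
  have i1: "integrable L (\<lambda>x. a1 x * tconv (heat_kernel t) b x)"
    by (rule bm_int[OF bm_mult[OF a1 tconv_bm[OF t b]]])
  have i2: "integrable L (\<lambda>x. a2 x * tconv (heat_kernel t) b x)"
    by (rule bm_int[OF bm_mult[OF a2 tconv_bm[OF t b]]])
  show ?thesis unfolding Ib_def using i1 i2 by (simp add: algebra_simps)
qed

lemma Ib_sym:
  assumes t: "t > 0" and a: "bm a" and b: "bm b"
  shows "Ib t a b = Ib t b a"
proof -
  have "Ib t a b = (\<integral>y. b y * (\<integral>x. a x * heat_kernel t (x - y) \<partial>L) \<partial>L)"
    unfolding Ib_def tconv_def by (rule SWAP[OF hk_bk[OF t] a b])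
  also have "\<dots> = Ib t b a"
    unfolding Ib_def tconv_def
    by (intro Bochner_Integration.integral_cong refl arg_cong[where f="\<lambda>z. _ * z"])
       (metis hk_sym[OF t] minus_diff_eq mult.commute)
  finally show ?thesis .
qed

lemma Ib_PD: "t > 0 \<Longrightarrow> bm w \<Longrightarrow> Ib t w w \<ge> 0"
  unfolding Ib_def by (rule PD)

lemma perim_ineq:
  assumes t: "t > 0" and v: "bm v" and w: "bm w"
  shows "Ib t v (\<lambda>y. 1 - v y) - Ib t w (\<lambda>y. 1 - w y) \<le> Ib t v (\<lambda>y. 1 - 2 * w y) - Ib t w (\<lambda>y. 1 - 2 * w y)"
proof -
  have one: "bm (\<lambda>_. 1)" by (rule bm_const)
  have e1: "Ib t v (\<lambda>y. 1 - v y) = Ib t v (\<lambda>_. 1) - Ib t v v"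
    using Ib_lin2[OF t v one v, of 1 "-1"] by simp
  have e2: "Ib t w (\<lambda>y. 1 - w y) = Ib t w (\<lambda>_. 1) - Ib t w w"
    using Ib_lin2[OF t w one w, of 1 "-1"] by simp
  have e3: "Ib t v (\<lambda>y. 1 - 2 * w y) = Ib t v (\<lambda>_. 1) - 2 * Ib t v w"
    using Ib_lin2[OF t v one w, of 1 "-2"] by simp
  have e4: "Ib t w (\<lambda>y. 1 - 2 * w y) = Ib t w (\<lambda>_. 1) - 2 * Ib t w w"
    using Ib_lin2[OF t w one w, of 1 "-2"] by simp
  have d: "bm (\<lambda>y. v y - w y)" by (rule bm_diff[OF v w])
  have "Ib t (\<lambda>y. v y - w y) (\<lambda>y. v y - w y) = Ib t v (\<lambda>y. v y - w y) - Ib t w (\<lambda>y. v y - w y)"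
    using Ib_lin1[OF t v w d, of 1 "-1"] by simp
  also have "\<dots> = (Ib t v v - Ib t v w) - (Ib t w v - Ib t w w)"
    using Ib_lin2[OF t v v w, of 1 "-1"] Ib_lin2[OF t w v w, of 1 "-1"] by simp
  finally have "Ib t (\<lambda>y. v y - w y) (\<lambda>y. v y - w y) = (Ib t v v - Ib t v w) - (Ib t w v - Ib t w w)" .
  moreover have "Ib t w v = Ib t v w" by (rule Ib_sym[OF t w v])
  moreover have "Ib t (\<lambda>y. v y - w y) (\<lambda>y. v y - w y) \<ge> 0" by (rule Ib_PD[OF t d])
  ultimately show ?thesis using e1 e2 e3 e4 by linarith
qed



lemma int_bm_mult:
  assumes F: "integrable L F" and u: "bm u"
  shows "integrable L (\<lambda>x. u x * F x)"
proof -
  obtain C where C: "\<forall>x\<in>Omega. \<bar>u x\<bar> \<le> C" using u unfolding bm_def by blast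
  have [measurable]: "u \<in> borel_measurable L" "F \<in> borel_measurable L"
    using u F unfolding bm_def by auto
  show ?thesis
  proof (rule Bochner_Integration.integrable_bound[OF integrable_mult_right[OF F, of "\<bar>C\<bar>"]])
    show "(\<lambda>x. u x * F x) \<in> borel_measurable L" by measurable
    show "AE x in L. norm (u x * F x) \<le> norm (\<bar>C\<bar> * F x)"
    proof (rule AE_I2)
      fix x assume "x \<in> space L"
      hence "\<bar>u x\<bar> \<le> \<bar>C\<bar>" using C by force
      thus "norm (u x * F x) \<le> norm (\<bar>C\<bar> * F x)" by (simp add: abs_mult mult_right_mono)
    qed
  qed
qed

lemma vphi:
  assumes t: "t > 0" and a: "bm a" and b: "bm b" and F1: "integrable L F1" and F2: "integrable L F2"
  shows "(\<integral>x. a x * (F1 x - F2 x + c * tconv (heat_kernel t) b x) \<partial>L)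
     = (\<integral>x. a x * F1 x + (1 - a x) * F2 x \<partial>L) - (\<integral>x. F2 x \<partial>L) + c * Ib t a b"
proof -
  have one_a: "bm (\<lambda>x. 1 - a x)" by (rule bm_diff[OF bm_const a])
  have g1: "integrable L (\<lambda>x. a x * F1 x + (1 - a x) * F2 x)"
    using int_bm_mult[OF F1 a] int_bm_mult[OF F2 one_a] by simp
  have g3: "integrable L (\<lambda>x. a x * tconv (heat_kernel t) b x)"
    by (rule bm_int[OF bm_mult[OF a tconv_bm[OF t b]]])
  have "(\<integral>x. a x * (F1 x - F2 x + c * tconv (heat_kernel t) b x) \<partial>L)
      = (\<integral>x. ((a x * F1 x + (1 - a x) * F2 x) - F2 x) + c * (a x * tconv (heat_kernel t) b x) \<partial>L)"
    by (intro Bochner_Integration.integral_cong refl) (simp add: algebra_simps)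
  also have "\<dots> = (\<integral>x. a x * F1 x + (1 - a x) * F2 x \<partial>L) - (\<integral>x. F2 x \<partial>L) + c * Ib t a b"
    unfolding Ib_def using g1 g3 F2 by simp
  finally show ?thesis .
qed

lemma phi_int:
  assumes t: "t > 0" and b: "bm b" and F1: "integrable L F1" and F2: "integrable L F2"
  shows "integrable L (\<lambda>x. F1 x - F2 x + c * tconv (heat_kernel t) b x)"
  using F1 F2 bm_int[OF tconv_bm[OF t b]] by simp

theorem theorem1:
  fixes \<tau> lam :: real
    and f :: 'i
    and S :: "'p set"
    and F1 F2 :: "'i \<Rightarrow> 'p \<Rightarrow> real \<times> real \<Rightarrow> real"
    and u :: "nat \<Rightarrow> real \<times> real \<Rightarrow> real"
    and \<Theta> :: "nat \<Rightarrow> 'p"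
  assumes tau_pos: "\<tau> > 0"
    and lambda_pos: "lam > 0"
    and F1_L1: "\<And>\<theta>. \<theta> \<in> S \<Longrightarrow> integrable (lebesgue_on Omega) (F1 f \<theta>)"
    and F2_L1: "\<And>\<theta>. \<theta> \<in> S \<Longrightarrow> integrable (lebesgue_on Omega) (F2 f \<theta>)"
    and u1_meas: "u 1 \<in> borel_measurable (lebesgue_on Omega)"
    and u1_binary: "\<And>x. x \<in> Omega \<Longrightarrow> u 1 x \<in> {0, 1}"
    and step1: "\<And>k. k \<ge> 1 \<Longrightarrow> \<Theta> k \<in> S \<and>
                  (\<forall>\<theta>\<in>S. fidelity F1 F2 f (u k) (\<Theta> k) \<le> fidelity F1 F2 f (u k) \<theta>)"
    and step3: "\<And>k x. k \<ge> 1 \<Longrightarrow> x \<in> Omega \<Longrightarrow>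
                  u (k + 1) x = (if ictm_phi \<tau> lam F1 F2 f (u k) (\<Theta> k) x \<le> 0 then 1 else 0)"
  shows "\<forall>k\<ge>1. energy \<tau> lam F1 F2 f (u (k + 1)) (\<Theta> (k + 1))
                 \<le> energy \<tau> lam F1 F2 f (u k) (\<Theta> k)"
proof -
  define c where "c = lam * sqrt (pi / \<tau>)"
  have c0: "c \<ge> 0" unfolding c_def using lambda_pos tau_pos by simp
  define K where "K = heat_kernel \<tau>"
  have phi_eq: "ictm_phi \<tau> lam F1 F2 f w \<theta> x = F1 f \<theta> x - F2 f \<theta> x + c * tconv K (\<lambda>y. 1 - 2 * w y) x" for w \<theta> x
    unfolding ictm_phi_def c_def K_def by simp
  have bm12: "bm w \<Longrightarrow> bm (\<lambda>y. 1 - 2 * w y)" for w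
    by (rule bm_diff[OF bm_const bm_cmult])
  have inv: "bm (u k) \<and> (\<forall>x\<in>Omega. u k x \<in> {0, 1})" if "k \<ge> 1" for k
    using that
  proof (induction k rule: dec_induct)
    case base
    have "\<forall>x\<in>Omega. \<bar>u 1 x\<bar> \<le> 1"
    proof
      fix x assume "x \<in> Omega"
      hence "u 1 x \<in> {0, 1}" by (rule u1_binary)
      thus "\<bar>u 1 x\<bar> \<le> 1" by auto
    qed
    hence "bm (u 1)" unfolding bm_def using u1_meas by blast
    thus ?case using u1_binary by simp
  next
    case (step k)
    have th: "\<Theta> k \<in> S" using step1 step.hyps(1) by blast
    have [measurable]: "F1 f (\<Theta> k) \<in> borel_measurable L" "F2 f (\<Theta> k) \<in> borel_measurable L"
      using F1_L1[OF th] F2_L1[OF th] by auto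
    have [measurable]: "tconv K (\<lambda>y. 1 - 2 * u k y) \<in> borel_measurable L"
      using tconv_bm[OF tau_pos bm12[of "u k"]] step.IH unfolding K_def bm_def by blast
    have mphi[measurable]: "ictm_phi \<tau> lam F1 F2 f (u k) (\<Theta> k) \<in> borel_measurable L"
      unfolding phi_eq[abs_def] by measurable
    have "bm (\<lambda>x. if ictm_phi \<tau> lam F1 F2 f (u k) (\<Theta> k) x \<le> 0 then 1 else 0)"
    proof -
      have "(\<lambda>x. indicator {..0::real} (ictm_phi \<tau> lam F1 F2 f (u k) (\<Theta> k) x) :: real) \<in> borel_measurable L"
        using measurable_comp[OF mphi borel_measurable_indicator[of "{..0::real}" borel]]
        by (simp add: comp_def)
      moreover have "(\<lambda>x. indicator {..0::real} (ictm_phi \<tau> lam F1 F2 f (u k) (\<Theta> k) x) :: real)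
          = (\<lambda>x. if ictm_phi \<tau> lam F1 F2 f (u k) (\<Theta> k) x \<le> 0 then 1 else 0)"
        by (auto simp: indicator_def)
      ultimately show ?thesis unfolding bm_def by (intro conjI exI[of _ 1]) auto
    qed
    hence "bm (u (Suc k))"
      by (rule bm_cong) (use step3 step.hyps(1) in auto)
    moreover have "\<forall>x\<in>Omega. u (Suc k) x \<in> {0, 1}"
      using step3 step.hyps(1) by auto
    ultimately show ?case by simp
  qed
  show ?thesis
  proof (intro allI impI)
    fix k :: nat assume k: "k \<ge> 1"
    define w v where "w = u k" and "v = u (k + 1)"
    define \<theta> \<theta>' where "\<theta> = \<Theta> k" and "\<theta>' = \<Theta> (k + 1)"
    have w: "bm w" "\<forall>x\<in>Omega. w x \<in> {0, 1}" using inv[OF k] unfolding w_def by auto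
    have v: "bm v" "\<forall>x\<in>Omega. v x \<in> {0, 1}" using inv[of "k + 1"] k unfolding v_def by auto
    have th: "\<theta> \<in> S" using step1 k unfolding \<theta>_def by blast
    have th': "\<theta>' \<in> S" "fidelity F1 F2 f v \<theta>' \<le> fidelity F1 F2 f v \<theta>"
      using step1[of "k + 1"] th unfolding \<theta>'_def v_def by auto
    have F1: "integrable L (F1 f \<theta>)" and F2: "integrable L (F2 f \<theta>)"
      using F1_L1[OF th] F2_L1[OF th] by auto
    define \<phi> where "\<phi> x = F1 f \<theta> x - F2 f \<theta> x + c * tconv K (\<lambda>y. 1 - 2 * w y) x" for x
    have en: "energy \<tau> lam F1 F2 f a b = fidelity F1 F2 f a b + c * Ib \<tau> a (\<lambda>y. 1 - a y)" for a b
      unfolding energy_def Ib_def c_def by simp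
    have fid: "fidelity F1 F2 f a \<theta> = (\<integral>x. a x * F1 f \<theta> x + (1 - a x) * F2 f \<theta> x \<partial>L)" for a
      unfolding fidelity_def by simp
    have vp: "(\<integral>x. a x * \<phi> x \<partial>L) = fidelity F1 F2 f a \<theta> - (\<integral>x. F2 f \<theta> x \<partial>L) + c * Ib \<tau> a (\<lambda>y. 1 - 2 * w y)"
      if a: "bm a" for a
      unfolding \<phi>_def fid K_def by (rule vphi[OF tau_pos a bm12[OF w(1)] F1 F2])
    have phint: "integrable L \<phi>"
      unfolding \<phi>_def[abs_def] K_def by (rule phi_int[OF tau_pos bm12[OF w(1)] F1 F2])
    have mono: "(\<integral>x. v x * \<phi> x \<partial>L) \<le> (\<integral>x. w x * \<phi> x \<partial>L)"
    proof (rule integral_mono)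
      show "integrable L (\<lambda>x. v x * \<phi> x)" by (rule int_bm_mult[OF phint v(1)])
      show "integrable L (\<lambda>x. w x * \<phi> x)" by (rule int_bm_mult[OF phint w(1)])
      fix x assume "x \<in> space L"
      hence x: "x \<in> Omega" by simp
      have vx: "v x = (if \<phi> x \<le> 0 then 1 else 0)"
        unfolding v_def \<phi>_def using step3[OF k x] phi_eq unfolding w_def \<theta>_def by simp
      have "w x \<in> {0, 1}" using w(2) x by blast
      thus "v x * \<phi> x \<le> w x * \<phi> x" using vx by auto
    qed
    have per: "c * (Ib \<tau> v (\<lambda>y. 1 - v y) - Ib \<tau> w (\<lambda>y. 1 - w y))
        \<le> c * (Ib \<tau> v (\<lambda>y. 1 - 2 * w y) - Ib \<tau> w (\<lambda>y. 1 - 2 * w y))"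
      by (rule mult_left_mono[OF perim_ineq[OF tau_pos v(1) w(1)] c0])
    have "energy \<tau> lam F1 F2 f v \<theta>' \<le> energy \<tau> lam F1 F2 f v \<theta>"
      unfolding en using th'(2) by simp
    also have "\<dots> \<le> energy \<tau> lam F1 F2 f w \<theta>"
      unfolding en using vp[OF v(1)] vp[OF w(1)] mono per by (simp add: algebra_simps)
    finally show "energy \<tau> lam F1 F2 f (u (k + 1)) (\<Theta> (k + 1)) \<le> energy \<tau> lam F1 F2 f (u k) (\<Theta> k)"
      unfolding v_def w_def \<theta>_def \<theta>'_def .
  qed
qed

end
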